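(* Let $S$ be a finite set of more than $6$ points in the plane in general position with distinct $x$-coordinates. Let $L$, $R$, $T$ be respectively the leftmost, rightmost and topmost points of $S$. Let $p\in S$, and let $r\in S\setminus\{p\}$ (the clockwise neighbor of $p$) be the point minimizing the clockwise angle from the upward vertical ray at $p$ to the ray $\overrightarrow{pr}$, and $q\in S\setminus\{p\}$ (the counterclockwise neighbor of $p$) the point minimizing the counterclockwise angle from the upward vertical ray at $p$ to the ray $\overrightarrow{pq}$. If either of the point sequences $[L,q,p,r,T,R]$ or $[T,q,p,r,R,L]$ is a convex chain, then $p$ is a vertex of the upper hull of $S$.
   Context: A sequence of points is a convex chain if every three consecutive points of the sequence make a right (clockwise) turn. The upper hull of $S$ is the part of the boundary of the convex hull of $S$ lying on or above the segment from the leftmost to the rightmost point. *)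

theory Defs
  imports "HOL-Analysis.Analysis"
begin

type_synonym pt = "real \<times> real"

text \<open>Orientation (twice the signed area); negative means a right (clockwise) turn.\<close>
definition orient :: "pt \<Rightarrow> pt \<Rightarrow> pt \<Rightarrow> real" where
  "orient a b c = (fst b - fst a) * (snd c - snd a) - (snd b - snd a) * (fst c - fst a)"

definition right_turn :: "pt \<Rightarrow> pt \<Rightarrow> pt \<Rightarrow> bool" where
  "right_turn a b c \<longleftrightarrow> orient a b c < 0"

definition convex_chain :: "pt list \<Rightarrow> bool" where
  "convex_chain xs \<longleftrightarrow> (\<forall>i. i + 2 < length xs \<longrightarrow> right_turn (xs ! i) (xs ! (i+1)) (xs ! (i+2)))"

definition general_position :: "pt set \<Rightarrow> bool" where
  "general_position S \<longleftrightarrow>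
     (\<forall>a\<in>S. \<forall>b\<in>S. \<forall>c\<in>S. a \<noteq> b \<and> b \<noteq> c \<and> a \<noteq> c \<longrightarrow> orient a b c \<noteq> 0)"

definition norm_angle :: "real \<Rightarrow> real" where
  "norm_angle t = (if t < 0 then t + 2 * pi else t)"

definition vec_c :: "pt \<Rightarrow> pt \<Rightarrow> complex" where
  "vec_c p r = Complex (fst r - fst p) (snd r - snd p)"

text \<open>Clockwise angle in [0,2pi) from the upward vertical ray at p to the ray p->r.\<close>
definition cw_angle :: "pt \<Rightarrow> pt \<Rightarrow> real" where
  "cw_angle p r = norm_angle (Arg (\<i> / vec_c p r))"

text \<open>Counterclockwise angle in [0,2pi) from the upward vertical ray at p to the ray p->q.\<close>
definition ccw_angle :: "pt \<Rightarrow> pt \<Rightarrow> real" where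
  "ccw_angle p q = norm_angle (Arg (vec_c p q / \<i>))"

text \<open>p is a vertex of the upper hull: an extreme point of conv S lying on or above segment LR.\<close>
definition upper_hull_vertex :: "pt set \<Rightarrow> pt \<Rightarrow> pt \<Rightarrow> pt \<Rightarrow> bool" where
  "upper_hull_vertex S L R p \<longleftrightarrow> p extreme_point_of (convex hull S) \<and> orient L R p \<ge> 0"

end

theory Submission
  imports Defs
begin

lemma norm_angle_range: "- pi < t \<Longrightarrow> t \<le> pi \<Longrightarrow> 0 \<le> norm_angle t \<and> norm_angle t < 2 * pi"
  unfolding norm_angle_def using pi_gt_zero by auto

lemma sin_norm_angle: "sin (norm_angle t) = sin t" and cos_norm_angle: "cos (norm_angle t) = cos t"
  unfolding norm_angle_def by (auto simp: sin_add cos_add)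

lemma polar:
  assumes "s \<noteq> p"
  shows "cmod (vec_c p s) > 0
    \<and> fst s - fst p = - cmod (vec_c p s) * sin (ccw_angle p s)
    \<and> snd s - snd p = cmod (vec_c p s) * cos (ccw_angle p s)"
proof -
  define z where "z = vec_c p s / \<i>"
  have v0: "vec_c p s \<noteq> 0"
    using assms by (cases s, cases p) (auto simp: vec_c_def complex_eq_iff)
  hence z0: "z \<noteq> 0" by (simp add: z_def)
  have nz: "cmod z = cmod (vec_c p s)" by (simp add: z_def norm_mult)
  have re: "Re z = snd s - snd p" and im: "Im z = -(fst s - fst p)"
    by (simp_all add: z_def vec_c_def)
  have "cos (Arg z) = Re z / cmod z" "sin (Arg z) = Im z / cmod z"
    using z0 cos_Arg sin_Arg by auto
  moreover have "cmod z > 0" using z0 by simp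
  ultimately show ?thesis
    unfolding ccw_angle_def z_def[symmetric] sin_norm_angle cos_norm_angle
    using re im nz by (auto simp: field_simps)
qed

lemma ccw_range: "0 \<le> ccw_angle p s \<and> ccw_angle p s < 2 * pi"
  unfolding ccw_angle_def using Arg_bounded norm_angle_range by blast

lemma cw_ccw:
  shows "cw_angle p s = (if ccw_angle p s = 0 then 0 else 2 * pi - ccw_angle p s)"
proof -
  define z where "z = vec_c p s / \<i>"
  have iz: "\<i> / vec_c p s = inverse z" by (simp add: z_def divide_inverse mult.commute)
  have cw: "cw_angle p s = norm_angle (if z \<in> \<real> then Arg z else - Arg z)"
    unfolding cw_angle_def iz Arg_inverse ..
  have cc: "ccw_angle p s = norm_angle (Arg z)" unfolding ccw_angle_def z_def ..
  show ?thesis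
  proof (cases "z \<in> \<real>")
    case True
    then have "Arg z = 0 \<or> Arg z = pi"
      by (cases "0 \<le> Re z") (simp_all add: Arg_eq_0 Arg_eq_pi complex_is_Real_iff)
    then show ?thesis using True cw cc pi_gt_zero by (auto simp: norm_angle_def)
  next
    case False
    then have "Arg z \<noteq> 0" "Arg z \<noteq> pi"
      using Arg_eq_0 Arg_eq_pi complex_is_Real_iff by auto
    then show ?thesis using False cw cc pi_gt_zero Arg_bounded[of z]
      by (auto simp: norm_angle_def)
  qed
qed

lemma orient_sin:
  assumes "a \<noteq> p" "b \<noteq> p"
  shows "orient p a b = cmod (vec_c p a) * cmod (vec_c p b) * sin (ccw_angle p b - ccw_angle p a)"
proof -
  have e: "fst a - fst p = - cmod (vec_c p a) * sin (ccw_angle p a)" "snd a - snd p = cmod (vec_c p a) * cos (ccw_angle p a)"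
    "fst b - fst p = - cmod (vec_c p b) * sin (ccw_angle p b)" "snd b - snd p = cmod (vec_c p b) * cos (ccw_angle p b)"
    using polar[OF assms(1)] polar[OF assms(2)] by auto
  then have "orient p a b = (- cmod (vec_c p a) * sin (ccw_angle p a)) * (cmod (vec_c p b) * cos (ccw_angle p b))
     - (cmod (vec_c p a) * cos (ccw_angle p a)) * (- cmod (vec_c p b) * sin (ccw_angle p b))"
    unfolding orient_def by (simp only: e)
  then show ?thesis unfolding sin_diff by (simp add: algebra_simps)
qed

lemma sin_pos_range: "0 \<le> x \<Longrightarrow> x < 2 * pi \<Longrightarrow> sin x > 0 \<Longrightarrow> 0 < x \<and> x < pi"
proof -
  assume a: "0 \<le> x" "x < 2 * pi" "sin x > 0"
  have "x \<noteq> 0" using a(3) by auto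
  moreover have "\<not> pi \<le> x" using sin_le_zero[of x] a by linarith
  ultimately show ?thesis using a(1) by linarith
qed

lemma sin_zero_range: "0 \<le> x \<Longrightarrow> x < pi \<Longrightarrow> sin x = 0 \<Longrightarrow> x = 0"
proof (rule ccontr)
  assume a: "0 \<le> x" "x < pi" "sin x = 0" "x \<noteq> 0"
  then have "0 < x" by linarith
  then have "sin x > 0" using sin_gt_zero a(2) by blast
  then show False using a(3) by simp
qed

theorem lemma2:
  fixes S :: "pt set" and L R T p q r :: pt
  assumes "finite S" and "card S > 6"
    and "general_position S"
    and "inj_on fst S"
    and "L \<in> S" and "\<forall>s\<in>S. fst L \<le> fst s"
    and "R \<in> S" and "\<forall>s\<in>S. fst s \<le> fst R"
    and "T \<in> S" and "\<forall>s\<in>S. snd s \<le> snd T"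
    and "p \<in> S"
    and "r \<in> S - {p}" and "\<forall>s\<in>S - {p}. cw_angle p r \<le> cw_angle p s"
    and "q \<in> S - {p}" and "\<forall>s\<in>S - {p}. ccw_angle p q \<le> ccw_angle p s"
    and "convex_chain [L, q, p, r, T, R] \<or> convex_chain [T, q, p, r, R, L]"
  shows "upper_hull_vertex S L R p"
proof -
  define th where "th = ccw_angle p"
  define rh where "rh = (\<lambda>s. cmod (vec_c p s))"
  have rt: "right_turn q p r"
  proof -
    have h: "\<And>xs. convex_chain xs \<Longrightarrow> length xs = 6 \<Longrightarrow> right_turn (xs!1) (xs!2) (xs!3)"
      unfolding convex_chain_def by (drule_tac x=1 in spec) (simp add: numeral_eq_Suc)
    show ?thesis using assms(16) h[of "[L, q, p, r, T, R]"] h[of "[T, q, p, r, R, L]"]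
      by (auto simp: numeral_eq_Suc)
  qed
  have oqr: "orient p q r > 0" using rt unfolding right_turn_def orient_def by (simp add: algebra_simps)
  have qp: "q \<noteq> p" and rp: "r \<noteq> p" using assms(12,14) by auto
  have thr: "\<And>s. 0 \<le> th s \<and> th s < 2 * pi" unfolding th_def using ccw_range by blast
  have cw: "\<And>s. cw_angle p s = (if th s = 0 then 0 else 2 * pi - th s)" unfolding th_def using cw_ccw by blast
  have osin: "\<And>a b. a \<noteq> p \<Longrightarrow> b \<noteq> p \<Longrightarrow> orient p a b = rh a * rh b * sin (th b - th a)"
    unfolding th_def rh_def using orient_sin by blast
  have rhp: "\<And>s. s \<noteq> p \<Longrightarrow> rh s > 0" unfolding rh_def using polar by blast
  have dx: "\<And>s. s \<noteq> p \<Longrightarrow> fst s - fst p = - rh s * sin (th s)" unfolding rh_def th_def using polar by blast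
  have hq: "\<And>s. s \<in> S - {p} \<Longrightarrow> th q \<le> th s" using assms(15) th_def by blast
  have hr: "\<And>s. s \<in> S - {p} \<Longrightarrow> cw_angle p r \<le> cw_angle p s" using assms(13) by blast
  have sqr: "sin (th r - th q) > 0"
  proof -
    have "0 < (rh q * rh r) * sin (th r - th q)" using oqr osin[OF qp rp] by simp
    moreover have "rh q * rh r > 0" using rhp[OF qp] rhp[OF rp] by simp
    ultimately show ?thesis by (simp add: zero_less_mult_iff)
  qed
  have thr0: "th r \<noteq> 0"
  proof
    assume "th r = 0"
    then have "th q = 0" using hq[OF assms(12)] thr[of q] by linarith
    then show False using sqr \<open>th r = 0\<close> by simp
  qed
  have ins: "\<And>s. s \<in> S - {p} \<Longrightarrow> th s \<noteq> 0 \<and> th s \<le> th r \<and> th q \<le> th s"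
  proof -
    fix s assume s: "s \<in> S - {p}"
    have "cw_angle p r \<le> cw_angle p s" using hr[OF s] .
    then show "th s \<noteq> 0 \<and> th s \<le> th r \<and> th q \<le> th s"
      using cw[of r] cw[of s] thr0 thr[of r] hq[OF s] by (auto split: if_splits)
  qed
  have dqr: "0 < th r - th q \<and> th r - th q < pi"
    using sin_pos_range[OF _ _ sqr] thr[of r] thr[of q] ins[OF assms(12)] by linarith
  have fpos: "\<And>s. s \<in> S - {p} \<Longrightarrow> 0 < orient p q s - orient p r s"
  proof -
    fix s assume s: "s \<in> S - {p}"
    then have sp: "s \<noteq> p" by blast
    have a: "0 \<le> th s - th q" "th s - th q < pi" using ins[OF s] dqr by auto
    have b: "0 \<le> th r - th s" "th r - th s < pi" using ins[OF s] dqr by auto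
    have s1: "sin (th s - th q) \<ge> 0" using a sin_ge_zero by simp
    have s2: "sin (th r - th s) \<ge> 0" using b sin_ge_zero by simp
    have "\<not> (sin (th s - th q) = 0 \<and> sin (th r - th s) = 0)"
    proof
      assume h: "sin (th s - th q) = 0 \<and> sin (th r - th s) = 0"
      then have "th s - th q = 0" "th r - th s = 0" using sin_zero_range a b by blast+
      then show False using dqr by linarith
    qed
    then have "sin (th s - th q) + sin (th r - th s) > 0" using s1 s2 by linarith
    moreover have "orient p q s - orient p r s = rh q * rh s * sin (th s - th q) + rh r * rh s * sin (th r - th s)"
      using osin[OF qp sp] osin[OF rp sp] by (simp add: sin_diff algebra_simps)
    moreover have "rh q > 0" "rh r > 0" "rh s > 0" using rhp qp rp sp by auto
    moreover have t1: "rh q * rh s * sin (th s - th q) \<ge> 0" using s1 \<open>rh q > 0\<close> \<open>rh s > 0\<close> by simp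
    moreover have t2: "rh r * rh s * sin (th r - th s) \<ge> 0" using s2 \<open>rh r > 0\<close> \<open>rh s > 0\<close> by simp
    moreover have "rh q * rh s * sin (th s - th q) > 0 \<or> rh r * rh s * sin (th r - th s) > 0"
    proof (cases "sin (th s - th q) > 0")
      case True then show ?thesis using \<open>rh q > 0\<close> \<open>rh s > 0\<close> by simp
    next
      case False then have "sin (th r - th s) > 0" using s1 s2 \<open>sin (th s - th q) + sin (th r - th s) > 0\<close> by linarith
      then show ?thesis using \<open>rh r > 0\<close> \<open>rh s > 0\<close> by simp
    qed
    ultimately show "0 < orient p q s - orient p r s" by linarith
  qed
  define a :: pt where "a = (- (snd q - snd r), fst q - fst r)"
  have feq: "\<And>x. orient p q x - orient p r x = inner a x - inner a p"
    unfolding a_def orient_def by (simp add: inner_prod_def algebra_simps)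
  have "convex hull (S - {p}) \<subseteq> {x. inner a x > inner a p}"
    apply (rule hull_minimal)
    using fpos feq convex_halfspace_gt by auto
  then have "p \<notin> convex hull (S - {p})" by auto
  then have ext: "p extreme_point_of convex hull S"
    using extreme_point_of_convex_hull_insert[of "S - {p}" p] assms(1,11)
    by (metis finite_Diff insert_Diff)
  have "orient L R p \<ge> 0"
  proof (cases "L = p \<or> R = p")
    case True
    then show ?thesis unfolding orient_def by auto
  next
    case False
    then have Lp: "L \<noteq> p" and Rp: "R \<noteq> p" by auto
    have "fst L \<noteq> fst p" using assms(4,5,11) Lp inj_on_def by metis
    then have xL: "fst L < fst p" using assms(6,11) by force
    have "fst R \<noteq> fst p" using assms(4,7,11) Rp inj_on_def by metis
    then have xR: "fst R > fst p" using assms(8,11) by force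
    have "rh L * sin (th L) > 0" using dx[OF Lp] xL by linarith
    then have "sin (th L) > 0" using rhp[OF Lp] by (simp add: zero_less_mult_iff)
    then have tL: "th L < pi" using sin_pos_range thr by blast
    have "rh R * sin (th R) < 0" using dx[OF Rp] xR by linarith
    then have "sin (th R) < 0" using rhp[OF Rp] by (simp add: mult_less_0_iff)
    then have tR: "th R > pi" using sin_ge_zero thr[of R] by force
    have L': "L \<in> S - {p}" and R': "R \<in> S - {p}" using assms(5,7) Lp Rp by auto
    have "0 < th R - th L" "th R - th L < pi" using tL tR ins[OF L'] ins[OF R'] dqr by auto
    then have "sin (th R - th L) > 0" using sin_gt_zero by blast
    then have "orient p L R > 0" using osin[OF Lp Rp] rhp[OF Lp] rhp[OF Rp] by simp
    then show ?thesis unfolding orient_def by (simp add: algebra_simps)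
  qed
  then show ?thesis unfolding upper_hull_vertex_def using ext by blast
qed

end
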